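(* Let $\mathcal{B}$ be a Borel-measurable partition of $\Omega$ with $\underline{P}(B)>0$ for all $B\in\mathcal{B}$, and let $A\in\mathscr{B}(\Omega)$. If $\mathcal{B}$ dilates (respectively strictly dilates) $A$ under either Dempster's rule or the Geometric rule, then $\mathcal{B}$ dilates (respectively strictly dilates) $A$ under the generalized Bayes rule.
   Context: $\Omega$ is a separable, completely metrizable space with Borel $\sigma$-algebra $\mathscr{B}(\Omega)$; $\underline{P}$ is a Choquet capacity of order 2 on $\mathscr{B}(\Omega)$ (a coherent lower probability with weakly compact set of dominating measures satisfying $\underline{P}(A\cup B)\ge\underline{P}(A)+\underline{P}(B)-\underline{P}(A\cap B)$); $\Pi=\{P:P\ge\underline{P}\}$, $\underline{P}(A)=\inf_{P\in\Pi}P(A)$, $\overline{P}(A)=\sup_{P\in\Pi}P(A)=1-\underline{P}(A^c)$. Generalized Bayes rule: $\underline{P}_{\mathfrak{B}}(A\mid B)=\inf_{P\in\Pi}P(A\cap B)/P(B)$, $\overline{P}_{\mathfrak{B}}(A\mid B)=\sup_{P\in\Pi}P(A\cap B)/P(B)$. Dempster's rule: $\overline{P}_{\mathfrak{D}}(A\mid B)=\overline{P}(A\cap B)/\overline{P}(B)$, $\underline{P}_{\mathfrak{D}}(A\mid B)=1-\overline{P}_{\mathfrak{D}}(A^c\mid B)$. Geometric rule: $\underline{P}_{\mathfrak{G}}(A\mid B)=\underline{P}(A\cap B)/\underline{P}(B)$, $\overline{P}_{\mathfrak{G}}(A\mid B)=1-\underline{P}_{\mathfrak{G}}(A^c\mid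 B)$. For a rule with conditional lower/upper probabilities $\underline{P}_\bullet,\overline{P}_\bullet$, $\mathcal{B}$ strictly dilates $A$ if $\sup_{B\in\mathcal{B}}\underline{P}_\bullet(A\mid B)<\underline{P}(A)\le\overline{P}(A)<\inf_{B\in\mathcal{B}}\overline{P}_\bullet(A\mid B)$; $\mathcal{B}$ dilates $A$ if this holds with either (but not both) outer strict inequality allowed to be an equality. *)

theory Defs
  imports "HOL-Probability.Probability"
begin

definition core :: "('a::topological_space set \<Rightarrow> real) \<Rightarrow> 'a measure set" where
  "core lP = {M. prob_space M \<and> sets M = sets (borel :: 'a measure) \<and>
                 (\<forall>A\<in>sets (borel :: 'a measure). lP A \<le> measure M A)}"

definition weak_conv_seq :: "(nat \<Rightarrow> 'a::topological_space measure) \<Rightarrow> 'a measure \<Rightarrow> bool" where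
  "weak_conv_seq Ms M \<longleftrightarrow>
     (\<forall>f :: 'a \<Rightarrow> real. continuous_on UNIV f \<and> bounded (range f) \<longrightarrow>
        (\<lambda>n. integral\<^sup>L (Ms n) f) \<longlonglongrightarrow> integral\<^sup>L M f)"

text \<open>(Sequential) weak compactness; on a Polish space the weak topology on probability
  measures is metrizable, so this is compactness in the weak topology.\<close>
definition weakly_compact_set :: "'a::topological_space measure set \<Rightarrow> bool" where
  "weakly_compact_set S \<longleftrightarrow>
     (\<forall>Ms :: nat \<Rightarrow> 'a measure. (\<forall>n. Ms n \<in> S) \<longrightarrow> (\<exists>r M. strict_mono r \<and> M \<in> S \<and> weak_conv_seq (Ms \<circ> r) M))"

definition choquet2 :: "('a::topological_space set \<Rightarrow> real) \<Rightarrow> bool" where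
  "choquet2 lP \<longleftrightarrow>
     core lP \<noteq> {} \<and>
     (\<forall>A\<in>sets (borel :: 'a measure). lP A = (INF M\<in>core lP. measure M A)) \<and>
     weakly_compact_set (core lP) \<and>
     (\<forall>A\<in>sets (borel :: 'a measure). \<forall>B\<in>sets (borel :: 'a measure).
        lP (A \<union> B) \<ge> lP A + lP B - lP (A \<inter> B))"

definition upperP :: "('a::topological_space set \<Rightarrow> real) \<Rightarrow> 'a set \<Rightarrow> real" where
  "upperP lP A = (SUP M\<in>core lP. measure M A)"

text \<open>Generalized Bayes rule.\<close>
definition lowerB :: "('a::topological_space set \<Rightarrow> real) \<Rightarrow> 'a set \<Rightarrow> 'a set \<Rightarrow> real" where
  "lowerB lP A B = (INF M\<in>core lP. measure M (A \<inter> B) / measure M B)"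
definition upperB :: "('a::topological_space set \<Rightarrow> real) \<Rightarrow> 'a set \<Rightarrow> 'a set \<Rightarrow> real" where
  "upperB lP A B = (SUP M\<in>core lP. measure M (A \<inter> B) / measure M B)"

text \<open>Dempster's rule.\<close>
definition upperD :: "('a::topological_space set \<Rightarrow> real) \<Rightarrow> 'a set \<Rightarrow> 'a set \<Rightarrow> real" where
  "upperD lP A B = upperP lP (A \<inter> B) / upperP lP B"
definition lowerD :: "('a::topological_space set \<Rightarrow> real) \<Rightarrow> 'a set \<Rightarrow> 'a set \<Rightarrow> real" where
  "lowerD lP A B = 1 - upperD lP (- A) B"

text \<open>Geometric rule.\<close>
definition lowerG :: "('a::topological_space set \<Rightarrow> real) \<Rightarrow> 'a set \<Rightarrow> 'a set \<Rightarrow> real" where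
  "lowerG lP A B = lP (A \<inter> B) / lP B"
definition upperG :: "('a::topological_space set \<Rightarrow> real) \<Rightarrow> 'a set \<Rightarrow> 'a set \<Rightarrow> real" where
  "upperG lP A B = 1 - lowerG lP (- A) B"

definition strictly_dilates ::
  "('a set \<Rightarrow> real) \<Rightarrow> ('a set \<Rightarrow> real) \<Rightarrow> ('a set \<Rightarrow> 'a set \<Rightarrow> real) \<Rightarrow> ('a set \<Rightarrow> 'a set \<Rightarrow> real)
    \<Rightarrow> 'a set set \<Rightarrow> 'a set \<Rightarrow> bool" where
  "strictly_dilates lP uP lc uc \<B> A \<longleftrightarrow>
     (SUP B\<in>\<B>. lc A B) < lP A \<and> lP A \<le> uP A \<and> uP A < (INF B\<in>\<B>. uc A B)"

definition dilates ::
  "('a set \<Rightarrow> real) \<Rightarrow> ('a set \<Rightarrow> real) \<Rightarrow> ('a set \<Rightarrow> 'a set \<Rightarrow> real) \<Rightarrow> ('a set \<Rightarrow> 'a set \<Rightarrow> real)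
    \<Rightarrow> 'a set set \<Rightarrow> 'a set \<Rightarrow> bool" where
  "dilates lP uP lc uc \<B> A \<longleftrightarrow>
     lP A \<le> uP A \<and>
     (((SUP B\<in>\<B>. lc A B) \<le> lP A \<and> uP A < (INF B\<in>\<B>. uc A B)) \<or>
      ((SUP B\<in>\<B>. lc A B) < lP A \<and> uP A \<le> (INF B\<in>\<B>. uc A B)))"

definition borel_partition :: "'a::topological_space set set \<Rightarrow> bool" where
  "borel_partition \<B> \<longleftrightarrow>
     \<B> \<subseteq> sets (borel :: 'a measure) \<and> {} \<notin> \<B> \<and> \<Union>\<B> = UNIV \<and> disjoint \<B>"

end

theory Submission
  imports Defs
begin

lemma core_facts:
  assumes "M \<in> core lP"
  shows "prob_space M" "sets M = sets borel" "\<And>X. X \<in> sets borel \<Longrightarrow> lP X \<le> measure M X"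
  using assms unfolding core_def by auto

lemma core_split:
  assumes "M \<in> core lP" "A \<in> sets borel" "B \<in> sets borel"
  shows "measure M (- A \<inter> B) = measure M B - measure M (A \<inter> B)"
proof -
  interpret prob_space M using core_facts(1)[OF assms(1)] .
  have s: "sets M = sets borel" using core_facts(2)[OF assms(1)] .
  have "- A \<inter> B = B - (A \<inter> B)" by auto
  moreover have "measure M (B - (A \<inter> B)) = measure M B - measure M (A \<inter> B)"
    by (rule finite_measure_Diff) (use assms s in auto)
  ultimately show ?thesis by simp
qed

lemma core_bounds:
  assumes "M \<in> core lP"
  shows "measure M X \<le> 1" "0 \<le> measure M X"
proof -
  interpret prob_space M using core_facts(1)[OF assms(1)] .
  show "measure M X \<le> 1" by simp
  show "0 \<le> measure M X" by simp
qed

lemma core_mono: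
  assumes "M \<in> core lP" "X \<in> sets borel" "Y \<in> sets borel" "X \<subseteq> Y"
  shows "measure M X \<le> measure M Y"
proof -
  interpret prob_space M using core_facts(1)[OF assms(1)] .
  show ?thesis using assms core_facts(2)[OF assms(1)] by (intro finite_measure_mono) auto
qed

locale setting =
  fixes lP :: "'a::polish_space set \<Rightarrow> real" and A B :: "'a set"
  assumes ch: "choquet2 lP"
    and Bm: "B \<in> sets borel" and Am: "A \<in> sets borel" and Bpos: "lP B > 0"
begin

lemma ne: "core lP \<noteq> {}" using ch unfolding choquet2_def by auto

lemma lP_eq: "X \<in> sets borel \<Longrightarrow> lP X = (INF M\<in>core lP. measure M X)"
  using ch unfolding choquet2_def by auto

lemma MB_pos: "M \<in> core lP \<Longrightarrow> measure M B > 0"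
  using core_facts(3)[of M lP B] Bm Bpos by auto

lemma ratio_bounds:
  assumes "M \<in> core lP" "X \<in> sets borel"
  shows "0 \<le> measure M (X \<inter> B) / measure M B" "measure M (X \<inter> B) / measure M B \<le> 1"
proof -
  have p: "measure M B > 0" using MB_pos assms by auto
  have "measure M (X \<inter> B) \<le> measure M B" using core_mono[OF assms(1)] assms Bm by auto
  then show "measure M (X \<inter> B) / measure M B \<le> 1" using p by simp
  show "0 \<le> measure M (X \<inter> B) / measure M B" using core_bounds(2)[OF assms(1)] p by simp
qed

lemma bdd_ratio: "X \<in> sets borel \<Longrightarrow> bdd_below ((\<lambda>M. measure M (X \<inter> B) / measure M B) ` core lP)"
  "X \<in> sets borel \<Longrightarrow> bdd_above ((\<lambda>M. measure M (X \<inter> B) / measure M B) ` core lP)"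
  by (rule bdd_belowI[where m=0], use ratio_bounds(1) in auto)
     (rule bdd_aboveI[where M=1], use ratio_bounds(2) in auto)

lemma bdd_meas: "bdd_above ((\<lambda>M. measure M X) ` core lP)"
  "bdd_below ((\<lambda>M. measure M X) ` core lP)"
  by (rule bdd_aboveI[where M=1], use core_bounds(1) in auto)
     (rule bdd_belowI[where m=0], use core_bounds(2) in auto)

lemma lowerB_le: "M \<in> core lP \<Longrightarrow> lowerB lP A B \<le> measure M (A \<inter> B) / measure M B"
  unfolding lowerB_def by (rule cINF_lower[OF bdd_ratio(1)[OF Am]])

lemma upperB_ge: "M \<in> core lP \<Longrightarrow> measure M (A \<inter> B) / measure M B \<le> upperB lP A B"
  unfolding upperB_def by (rule cSUP_upper[OF _ bdd_ratio(2)[OF Am]])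

lemma lowerB_nonneg: "0 \<le> lowerB lP A B"
  unfolding lowerB_def using ne ratio_bounds(1)[OF _ Am] by (auto intro!: cINF_greatest)

lemma upperB_le1: "upperB lP A B \<le> 1"
  unfolding upperB_def using ne ratio_bounds(2)[OF _ Am] by (auto intro!: cSUP_least)

lemma upperP_ge: "M \<in> core lP \<Longrightarrow> measure M X \<le> upperP lP X"
  unfolding upperP_def by (rule cSUP_upper[OF _ bdd_meas(1)])

lemma upperP_nonneg: "0 \<le> upperP lP X"
proof -
  obtain M where "M \<in> core lP" using ne by auto
  then show ?thesis using upperP_ge core_bounds(2) by (meson order_trans)
qed

lemma uB_pos: "upperP lP B > 0"
proof -
  obtain M where M: "M \<in> core lP" using ne by auto
  then show ?thesis using upperP_ge[OF M, of B] MB_pos[OF M] by linarith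
qed

lemma lP_nonneg: "X \<in> sets borel \<Longrightarrow> 0 \<le> lP X"
  using lP_eq ne core_bounds(2) by (auto intro!: cINF_greatest)

lemma lP_le_B: "lP (X \<inter> B) \<le> lP B" if "X \<in> sets borel"
proof -
  have "lP (X \<inter> B) \<le> measure M B" if M: "M \<in> core lP" for M
  proof -
    have "lP (X \<inter> B) \<le> measure M (X \<inter> B)" using core_facts(3)[OF M] that \<open>X \<in> sets borel\<close> Bm by auto
    also have "\<dots> \<le> measure M B" using core_mono[OF M] \<open>X \<in> sets borel\<close> Bm by auto
    finally show ?thesis .
  qed
  then show ?thesis using lP_eq[OF Bm] ne by (auto intro!: cINF_greatest)
qed

lemma a: "lowerB lP A B \<le> lowerD lP A B"
proof -
  let ?u = "upperP lP B" and ?l = "lowerB lP A B"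
  have "measure M (- A \<inter> B) \<le> ?u * (1 - ?l)" if M: "M \<in> core lP" for M
  proof -
    have p: "measure M B > 0" using MB_pos M .
    have "?l \<le> measure M (A \<inter> B) / measure M B" using lowerB_le M .
    then have "?l * measure M B \<le> measure M (A \<inter> B)" using p by (simp add: field_simps)
    then have "measure M (- A \<inter> B) \<le> measure M B * (1 - ?l)"
      using core_split[OF M Am Bm] by (simp add: algebra_simps)
    also have "\<dots> \<le> ?u * (1 - ?l)"
      using upperP_ge[OF M, of B] upperB_le1 lowerB_le[OF M] ratio_bounds(2)[OF M Am]
      by (intro mult_right_mono) auto
    finally show ?thesis .
  qed
  then have "upperP lP (- A \<inter> B) \<le> ?u * (1 - ?l)"
    unfolding upperP_def using ne by (auto intro!: cSUP_least)
  then show ?thesis using uB_pos unfolding lowerD_def upperD_def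
    by (simp add: field_simps)
qed

lemma b: "upperD lP A B \<le> upperB lP A B"
proof -
  let ?u = "upperP lP B" and ?h = "upperB lP A B"
  have "measure M (A \<inter> B) \<le> ?u * ?h" if M: "M \<in> core lP" for M
  proof -
    have p: "measure M B > 0" using MB_pos M .
    have "measure M (A \<inter> B) / measure M B \<le> ?h" using upperB_ge M .
    then have "measure M (A \<inter> B) \<le> measure M B * ?h" using p by (simp add: field_simps)
    also have "\<dots> \<le> ?u * ?h"
      using upperP_ge[OF M, of B] upperB_ge[OF M] ratio_bounds(1)[OF M Am]
      by (intro mult_right_mono) linarith+
    finally show ?thesis .
  qed
  then have "upperP lP (A \<inter> B) \<le> ?u * ?h"
    unfolding upperP_def using ne by (auto intro!: cSUP_least)
  then show ?thesis using uB_pos unfolding upperD_def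
    by (simp add: field_simps)
qed

lemma c: "lowerB lP A B \<le> lowerG lP A B"
proof -
  let ?l = "lowerB lP A B"
  have "?l * lP B \<le> measure M (A \<inter> B)" if M: "M \<in> core lP" for M
  proof -
    have p: "measure M B > 0" using MB_pos M .
    have "?l \<le> measure M (A \<inter> B) / measure M B" using lowerB_le M .
    then have "?l * measure M B \<le> measure M (A \<inter> B)" using p by (simp add: field_simps)
    moreover have "?l * lP B \<le> ?l * measure M B"
      using lowerB_nonneg core_facts(3)[OF M Bm] by (intro mult_left_mono) auto
    ultimately show ?thesis by linarith
  qed
  then have "?l * lP B \<le> lP (A \<inter> B)"
    using lP_eq[of "A \<inter> B"] Am Bm ne by (auto intro!: cINF_greatest)
  then show ?thesis using Bpos unfolding lowerG_def by (simp add: field_simps)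
qed

lemma d: "upperG lP A B \<le> upperB lP A B"
proof -
  let ?h = "upperB lP A B"
  have "(1 - ?h) * lP B \<le> measure M (- A \<inter> B)" if M: "M \<in> core lP" for M
  proof -
    have p: "measure M B > 0" using MB_pos M .
    have "measure M (A \<inter> B) / measure M B \<le> ?h" using upperB_ge M .
    then have "measure M (A \<inter> B) \<le> ?h * measure M B" using p by (simp add: field_simps)
    moreover have "(1 - ?h) * lP B \<le> (1 - ?h) * measure M B"
      using upperB_le1 core_facts(3)[OF M Bm] by (intro mult_left_mono) auto
    ultimately show ?thesis using core_split[OF M Am Bm] by (simp add: algebra_simps)
  qed
  then have "(1 - ?h) * lP B \<le> lP (- A \<inter> B)"
    using lP_eq[of "- A \<inter> B"] Am Bm ne by (auto intro!: cINF_greatest)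
  then show ?thesis using Bpos unfolding upperG_def lowerG_def by (simp add: field_simps)
qed

lemma lowerD_le1: "lowerD lP A B \<le> 1"
  unfolding lowerD_def upperD_def using upperP_nonneg uB_pos by simp

lemma upperD_nonneg: "0 \<le> upperD lP A B"
  unfolding upperD_def using upperP_nonneg uB_pos by simp

lemma lowerG_le1: "lowerG lP A B \<le> 1"
  unfolding lowerG_def using lP_le_B[OF Am] Bpos by simp

lemma upperG_nonneg: "0 \<le> upperG lP A B"
proof -
  have "lowerG lP (- A) B \<le> 1"
    unfolding lowerG_def using lP_le_B[of "- A"] Am Bpos by simp
  then show ?thesis unfolding upperG_def by simp
qed

end

theorem corollary5p6:
  fixes lP :: "'a::polish_space set \<Rightarrow> real"
    and \<B> :: "'a set set" and A :: "'a set"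
  assumes "choquet2 lP"
    and "borel_partition \<B>"
    and "\<forall>B\<in>\<B>. lP B > 0"
    and "A \<in> sets (borel :: 'a measure)"
  shows "(dilates lP (upperP lP) (lowerD lP) (upperD lP) \<B> A \<or>
          dilates lP (upperP lP) (lowerG lP) (upperG lP) \<B> A
            \<longrightarrow> dilates lP (upperP lP) (lowerB lP) (upperB lP) \<B> A)
       \<and> (strictly_dilates lP (upperP lP) (lowerD lP) (upperD lP) \<B> A \<or>
          strictly_dilates lP (upperP lP) (lowerG lP) (upperG lP) \<B> A
            \<longrightarrow> strictly_dilates lP (upperP lP) (lowerB lP) (upperB lP) \<B> A)"
proof -
  have S: "setting lP A B" if "B \<in> \<B>" for B
    using assms that unfolding borel_partition_def setting_def by auto
  have ne: "\<B> \<noteq> {}" using assms(2) unfolding borel_partition_def by auto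
  have D1: "(SUP B\<in>\<B>. lowerB lP A B) \<le> (SUP B\<in>\<B>. lowerD lP A B)"
    using ne setting.a[OF S] setting.lowerD_le1[OF S]
    by (intro cSUP_mono) (auto intro!: bdd_aboveI[where M=1])
  have D2: "(INF B\<in>\<B>. upperD lP A B) \<le> (INF B\<in>\<B>. upperB lP A B)"
    using ne setting.b[OF S] setting.upperD_nonneg[OF S]
    by (intro cINF_mono) (auto intro!: bdd_belowI[where m=0])
  have G1: "(SUP B\<in>\<B>. lowerB lP A B) \<le> (SUP B\<in>\<B>. lowerG lP A B)"
    using ne setting.c[OF S] setting.lowerG_le1[OF S]
    by (intro cSUP_mono) (auto intro!: bdd_aboveI[where M=1])
  have G2: "(INF B\<in>\<B>. upperG lP A B) \<le> (INF B\<in>\<B>. upperB lP A B)"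
    using ne setting.d[OF S] setting.upperG_nonneg[OF S]
    by (intro cINF_mono) (auto intro!: bdd_belowI[where m=0])
  show ?thesis
    unfolding dilates_def strictly_dilates_def using D1 D2 G1 G2 by linarith
qed

end
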